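(* Let $p$ be a positive random partition ($p_N(\pi)>0$ for all $N,\pi$) that generates the potential for TU games, and let $r^p$ be the restriction operator $$w^{r^p}_{-i}(S,\pi)=\frac{n}{n-s}\sum_{B\in\pi\cup\{\emptyset\}}\frac{p_N(\{S\}\cup\pi_{+i\leadsto B})}{p_{N\setminus\{i\}}(\{S\}\cup\pi)}\,w(S,\pi_{+i\leadsto B}).$$ Then (i) the $r^p$-Shapley value equals the $p$-Shapley value, $\mathrm{Sh}^{r^p}=\mathrm{Sh}^p$, where $$\mathrm{Sh}^p_i(w)=\sum_{(T,\tau)\in\mathcal{E}(N\setminus\{i\})}\Big(p_N(\{T\cup\{i\}\}\cup\tau)\,w(T\cup\{i\},\tau)-\frac{t}{n-t}\sum_{B\in\tau\cup\{\emptyset\}}p_N(\{T\}\cup\tau_{+i\leadsto B})\,w(T,\tau_{+i\leadsto B})\Big);$$ (ii) for TU games, $\mathrm{Sh}^{r^p}(v)=\mathrm{Sh}(v)$ for all $N\subseteq\mathbf{U}$ and all TU games $v$ on $N$.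
   Context: $\mathbf{U}$ is a finite set of players; cardinalities of $N,S,T,B$ are $n,s,t,b$. $\Pi(N)$ is the set of partitions of $N$ ($\Pi(\emptyset)=\{\emptyset\}$). A random partition is $p=(p_N)_{N\subseteq\mathbf{U}}$ with $p_N$ a probability distribution on $\Pi(N)$. $\pi_{+i\leadsto B}=(\pi\setminus\{B\})\cup\{B\cup\{i\}\}$ for $B\in\pi$, and $\pi_{+i\leadsto\emptyset}=\pi\cup\{\{i\}\}$. TU game on $N$: $v:2^N\to\mathbb{R}$, $v(\emptyset)=0$. Shapley value: $\mathrm{Sh}_i(v)=\sum_{S\subseteq N\setminus\{i\}}\frac{s!(n-s-1)!}{n!}(v(S\cup\{i\})-v(S))$. Potential: $\mathrm{Pot}(v)=\sum_{\emptyset\ne S\subseteq N}\frac{(s-1)!(n-s)!}{n!}v(S)$. Embedded coalitions $\mathcal{E}(N)=\{(S,\pi):S\subseteq N,\pi\in\Pi(N\setminus S)\}$. A TUX game on $N$ is $w:\mathcal{E}(N)\to\mathbb{R}$ with $w(\emptyset,\pi)=0$; $\mathbb{W}(N)$ is their set; a TU game $v$ is identified with the TUX game $w(S,\pi)=v(S)$. $\mathrm{E}_p(w)=\sum_{\pi\in\Pi(N)}p_N(\pi)\sum_{S\in\pi}w(S,\pi\setminus\{S\})$; $p$ generates the potential for TU games if $\mathrm{E}_p(v)=\mathrm{Pot}(v)$ for all TU games $v$. The formula for $w^{r^p}_{-i}$ is for all $N\subseteq\mathbf{U}$, $w\in\mathbb{W}(N)$, $i\in N$, $(S,\pi)\in\mathcal{E}(N\setminus\{i\})$,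 and defines $w^{r^p}_{-i}\in\mathbb{W}(N\setminus\{i\})$; this operator is path independent ($(w_{-i})_{-j}=(w_{-j})_{-i}$), so removal of a set $T$ of players, $w^{r^p}_{-T}$, is well defined. For such a path independent restriction operator $r$, the $r$-Shapley value is $\mathrm{Sh}^r(w)=\mathrm{Sh}(v^r_w)$, where $v^r_w(S)=w^r_{-(N\setminus S)}(S,\emptyset)$ for $S\subseteq N$. *)

theory Defs
  imports Complex_Main "HOL-Library.Disjoint_Sets"
begin

text \<open>Players form a finite type 'a (the universe U = UNIV).
A TUX game on N is a function w of a coalition S and a partition pi of N - S.\<close>

type_synonym 'a rpart = "'a set \<Rightarrow> 'a set set \<Rightarrow> real"
type_synonym 'a tux = "'a set \<Rightarrow> 'a set set \<Rightarrow> real"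

definition Parts :: "'a set \<Rightarrow> 'a set set set" where
  "Parts N = {\<pi>. partition_on N \<pi>}"

definition emb_coal :: "'a set \<Rightarrow> ('a set \<times> 'a set set) set" where
  "emb_coal N = {(S, \<pi>). S \<subseteq> N \<and> \<pi> \<in> Parts (N - S)}"

definition tux_game :: "'a set \<Rightarrow> 'a tux \<Rightarrow> bool" where
  "tux_game N w \<longleftrightarrow> (\<forall>\<pi> \<in> Parts N. w {} \<pi> = 0)"

definition tu_game :: "'a set \<Rightarrow> ('a set \<Rightarrow> real) \<Rightarrow> bool" where
  "tu_game N v \<longleftrightarrow> v {} = 0"

definition tu_as_tux :: "('a set \<Rightarrow> real) \<Rightarrow> 'a tux" where
  "tu_as_tux v = (\<lambda>S \<pi>. v S)"

definition random_partition :: "'a rpart \<Rightarrow> bool" where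
  "random_partition p \<longleftrightarrow>
     (\<forall>N. (\<forall>\<pi> \<in> Parts N. p N \<pi> \<ge> 0) \<and> (\<Sum>\<pi> \<in> Parts N. p N \<pi>) = 1)"

definition positive_rp :: "'a rpart \<Rightarrow> bool" where
  "positive_rp p \<longleftrightarrow> (\<forall>N. \<forall>\<pi> \<in> Parts N. p N \<pi> > 0)"

definition add_to :: "'a set set \<Rightarrow> 'a \<Rightarrow> 'a set \<Rightarrow> 'a set set" where
  "add_to \<pi> i B = (if B = {} then insert {i} \<pi> else insert (insert i B) (\<pi> - {B}))"

definition expect :: "'a rpart \<Rightarrow> 'a set \<Rightarrow> 'a tux \<Rightarrow> real" where
  "expect p N w = (\<Sum>\<pi> \<in> Parts N. p N \<pi> * (\<Sum>S \<in> \<pi>. w S (\<pi> - {S})))"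

definition Pot :: "'a set \<Rightarrow> ('a set \<Rightarrow> real) \<Rightarrow> real" where
  "Pot N v = (\<Sum>S \<in> {S. S \<subseteq> N \<and> S \<noteq> {}}.
      real (fact (card S - 1) * fact (card N - card S)) / real (fact (card N)) * v S)"

definition generates_potential :: "'a rpart \<Rightarrow> bool" where
  "generates_potential p \<longleftrightarrow>
     (\<forall>N v. tu_game N v \<longrightarrow> expect p N (tu_as_tux v) = Pot N v)"

definition Shapley :: "'a set \<Rightarrow> ('a set \<Rightarrow> real) \<Rightarrow> 'a \<Rightarrow> real" where
  "Shapley N v i = (\<Sum>S \<in> Pow (N - {i}).
      real (fact (card S) * fact (card N - card S - 1)) / real (fact (card N))
      * (v (insert i S) - v S))"

text \<open>The restriction operator r^p: removal of player i from a TUX game on N.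
For S = {} the value is 0 (the result is a TUX game, w(emptyset, pi) = 0).\<close>
definition restr_p :: "'a rpart \<Rightarrow> 'a set \<Rightarrow> 'a tux \<Rightarrow> 'a \<Rightarrow> 'a tux" where
  "restr_p p N w i = (\<lambda>S \<pi>. if S = {} then 0 else
      real (card N) / (real (card N) - real (card S)) *
      (\<Sum>B \<in> insert {} \<pi>.
         p N (insert S (add_to \<pi> i B)) / p (N - {i}) (insert S \<pi>) * w S (add_to \<pi> i B)))"

fun remove_list :: "'a rpart \<Rightarrow> 'a set \<Rightarrow> 'a tux \<Rightarrow> 'a list \<Rightarrow> 'a tux" where
  "remove_list p N w [] = w"
| "remove_list p N w (i # is) = remove_list p (N - {i}) (restr_p p N w i) is"

text \<open>Removal of a set T (well defined by path independence; an arbitrary order is chosen).\<close>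
definition remove_set :: "'a rpart \<Rightarrow> 'a set \<Rightarrow> 'a tux \<Rightarrow> 'a set \<Rightarrow> 'a tux" where
  "remove_set p N w T = remove_list p N w (SOME xs. set xs = T \<and> distinct xs)"

definition v_restr :: "'a rpart \<Rightarrow> 'a set \<Rightarrow> 'a tux \<Rightarrow> 'a set \<Rightarrow> real" where
  "v_restr p N w S = remove_set p N w (N - S) S {}"

definition Shapley_r :: "'a rpart \<Rightarrow> 'a set \<Rightarrow> 'a tux \<Rightarrow> 'a \<Rightarrow> real" where
  "Shapley_r p N w i = Shapley N (v_restr p N w) i"

definition Shapley_p :: "'a rpart \<Rightarrow> 'a set \<Rightarrow> 'a tux \<Rightarrow> 'a \<Rightarrow> real" where
  "Shapley_p p N w i = (\<Sum>(T, \<tau>) \<in> emb_coal (N - {i}).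
      p N (insert (insert i T) \<tau>) * w (insert i T) \<tau>
      - real (card T) / (real (card N) - real (card T)) *
        (\<Sum>B \<in> insert {} \<tau>. p N (insert T (add_to \<tau> i B)) * w T (add_to \<tau> i B)))"

end

theory Submission
  imports Defs
begin

definition restr_part :: "'a set \<Rightarrow> 'a set set \<Rightarrow> 'a set set" where
  "restr_part X \<sigma> = (\<lambda>C. C \<inter> X) ` \<sigma> - {{}}"

lemma parts_insert:
  assumes "S \<noteq> {}" "S \<subseteq> N" "\<sigma> \<in> Parts (N - S)"
  shows "insert S \<sigma> \<in> Parts N" "S \<notin> \<sigma>"
proof -
  have u: "\<Union>\<sigma> = N - S" using assms(3) by (simp add: Parts_def partition_on_def)
  have d: "disjnt S (\<Union>\<sigma>)" using u by (auto simp: disjnt_def)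
  show "insert S \<sigma> \<in> Parts N"
    using assms partition_on_insert[OF d, of N] by (simp add: Parts_def)
  show "S \<notin> \<sigma>" using u assms(1) by auto
qed

lemma parts_remove:
  assumes "\<pi> \<in> Parts N" "S \<in> \<pi>"
  shows "\<pi> - {S} \<in> Parts (N - S)"
proof -
  have pa: "partition_on N \<pi>" using assms by (simp add: Parts_def)
  have d: "disjnt S (\<Union>(\<pi> - {S}))"
    using partition_onD2[OF pa] assms(2) by (auto simp: disjnt_def disjoint_def)
  have "insert S (\<pi> - {S}) = \<pi>" using assms(2) by auto
  then show ?thesis using partition_on_insert[OF d, of N] pa by (simp add: Parts_def)
qed

lemma uniq_block:
  assumes "\<sigma> \<in> Parts X" "C \<in> \<sigma>" "i \<in> C"
  shows "(THE C. C \<in> \<sigma> \<and> i \<in> C) = C"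
proof (rule the_equality)
  show "C \<in> \<sigma> \<and> i \<in> C" using assms by auto
  fix D assume "D \<in> \<sigma> \<and> i \<in> D"
  then show "D = C" using assms partition_onD2[of X \<sigma>]
    by (auto simp: Parts_def disjoint_def)
qed

definition split_off :: "'a \<Rightarrow> 'a set set \<Rightarrow> 'a set set \<times> 'a set" where
  "split_off i \<sigma> = (let C = (THE C. C \<in> \<sigma> \<and> i \<in> C) in
     ((\<sigma> - {C}) \<union> (if C = {i} then {} else {C - {i}}), C - {i}))"

lemma add_to_parts:
  assumes "i \<notin> M" "\<tau> \<in> Parts M" "B \<in> insert {} \<tau>"
  shows "add_to \<tau> i B \<in> Parts (insert i M)"
proof (cases "B = {}")
  case True
  have u: "\<Union>\<tau> = M" using assms(2) by (simp add: Parts_def partition_on_def)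
  have d: "disjnt {i} (\<Union>\<tau>)" using u assms(1) by (auto simp: disjnt_def)
  have "insert i M - {i} = M" using assms(1) by auto
  then show ?thesis using True partition_on_insert[OF d, of "insert i M"] assms(2)
    by (simp add: Parts_def add_to_def)
next
  case False
  then have B: "B \<in> \<tau>" using assms(3) by auto
  have pa: "partition_on M \<tau>" using assms(2) by (simp add: Parts_def)
  have u: "\<Union>\<tau> = M" using pa by (simp add: partition_on_def)
  have d: "disjnt (insert i B) (\<Union>(\<tau> - {B}))"
    using partition_onD2[OF pa] B u assms(1) by (auto simp: disjnt_def disjoint_def)
  have r: "\<tau> - {B} \<in> Parts (M - B)" using parts_remove[OF assms(2) B] .
  have "insert i M - insert i B = M - B" using assms(1) by auto
  moreover have "insert i B \<subseteq> insert i M" using B u by auto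
  ultimately show ?thesis using False partition_on_insert[OF d, of "insert i M"] r
    by (simp add: Parts_def add_to_def)
qed

lemma split_off_add_to:
  assumes "i \<notin> M" "\<tau> \<in> Parts M" "B \<in> insert {} \<tau>"
  shows "split_off i (add_to \<tau> i B) = (\<tau>, B)"
proof (cases "B = {}")
  case True
  have P: "add_to \<tau> i B \<in> Parts (insert i M)" using add_to_parts[OF assms] .
  have "add_to \<tau> i B = insert {i} \<tau>" using True by (simp add: add_to_def)
  moreover have th: "(THE C. C \<in> insert {i} \<tau> \<and> i \<in> C) = {i}"
    using uniq_block[of "insert {i} \<tau>" "insert i M" "{i}" i] P True by (simp add: add_to_def)
  moreover have "{i} \<notin> \<tau>" using assms(1,2) by (auto simp: Parts_def partition_on_def)
  ultimately show ?thesis using True by (simp add: split_off_def Let_def)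
next
  case False
  then have B: "B \<in> \<tau>" using assms(3) by auto
  have P: "add_to \<tau> i B \<in> Parts (insert i M)" using add_to_parts[OF assms] .
  have e: "add_to \<tau> i B = insert (insert i B) (\<tau> - {B})" using False by (simp add: add_to_def)
  have th: "(THE C. C \<in> add_to \<tau> i B \<and> i \<in> C) = insert i B"
    using uniq_block[of "add_to \<tau> i B" "insert i M" "insert i B" i] P e by simp
  have u: "\<Union>\<tau> = M" using assms(2) by (simp add: Parts_def partition_on_def)
  have n1: "insert i B \<notin> \<tau>" using u assms(1) by auto
  have n2: "insert i B \<noteq> {i}" using False B u assms(1) by auto
  have n3: "insert i B - {i} = B" using B u assms(1) by auto
  have "(insert (insert i B) (\<tau> - {B}) - {insert i B}) = \<tau> - {B}" using n1 by auto
  then show ?thesis using th e n2 n3 B by (auto simp: split_off_def Let_def)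
qed

lemma split_off_parts:
  assumes "i \<notin> M" "\<sigma> \<in> Parts (insert i M)"
  shows "fst (split_off i \<sigma>) \<in> Parts M \<and> snd (split_off i \<sigma>) \<in> insert {} (fst (split_off i \<sigma>))
    \<and> add_to (fst (split_off i \<sigma>)) i (snd (split_off i \<sigma>)) = \<sigma>"
proof -
  have pa: "partition_on (insert i M) \<sigma>" using assms by (simp add: Parts_def)
  obtain C where C: "C \<in> \<sigma>" "i \<in> C" using partition_onD1[OF pa] by auto
  have th: "(THE C. C \<in> \<sigma> \<and> i \<in> C) = C" using uniq_block[OF assms(2) C] .
  have r: "\<sigma> - {C} \<in> Parts (insert i M - C)" using parts_remove[OF assms(2) C(1)] .
  have Csub: "C \<subseteq> insert i M" using partition_onD1[OF pa] C by auto
  show ?thesis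
  proof (cases "C = {i}")
    case True
    have so: "split_off i \<sigma> = (\<sigma> - {C}, {})" using th True by (simp add: split_off_def Let_def)
    have "insert i M - C = M" using True assms(1) by auto
    moreover have "add_to (\<sigma> - {C}) i {} = \<sigma>" using True C by (auto simp: add_to_def)
    ultimately show ?thesis using so r by simp
  next
    case False
    have so: "split_off i \<sigma> = (insert (C - {i}) (\<sigma> - {C}), C - {i})"
      using th False by (simp add: split_off_def Let_def)
    have ne: "C - {i} \<noteq> {}" using False C by auto
    have d: "disjnt (C - {i}) (\<Union>(\<sigma> - {C}))"
      using partition_onD2[OF pa] C by (auto simp: disjnt_def disjoint_def)
    have eq: "M - (C - {i}) = insert i M - C" using C assms(1) by auto
    have P1: "insert (C - {i}) (\<sigma> - {C}) \<in> Parts M"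
      using partition_on_insert[OF d, of M] r eq ne Csub assms(1) by (auto simp: Parts_def)
    have nin: "C - {i} \<notin> \<sigma>"
    proof
      assume a: "C - {i} \<in> \<sigma>"
      have "C - {i} \<noteq> C" using C by auto
      then have "disjnt (C - {i}) C" using partition_onD2[OF pa] a C(1) by (auto simp: disjoint_def disjnt_def)
      then show False using ne by (auto simp: disjnt_def)
    qed
    have "add_to (insert (C - {i}) (\<sigma> - {C})) i (C - {i}) = insert (insert i (C - {i})) (\<sigma> - {C})"
      using ne nin by (auto simp: add_to_def)
    also have "insert i (C - {i}) = C" using C by auto
    also have "insert C (\<sigma> - {C}) = \<sigma>" using C by auto
    finally show ?thesis using so P1 by simp
  qed
qed

lemma add_to_bij:
  assumes "i \<notin> M"
  shows "bij_betw (\<lambda>(\<tau>, B). add_to \<tau> i B) (Sigma (Parts M) (\<lambda>\<tau>. insert {} \<tau>)) (Parts (insert i M))"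
proof (rule bij_betw_byWitness[where f' = "split_off i"])
  show "\<forall>a\<in>Sigma (Parts M) (insert {}). split_off i (case a of (\<tau>, B) \<Rightarrow> add_to \<tau> i B) = a"
    using split_off_add_to[OF assms] by auto
  show "\<forall>a'\<in>Parts (insert i M). (case split_off i a' of (\<tau>, B) \<Rightarrow> add_to \<tau> i B) = a'"
    using split_off_parts[OF assms] by (auto simp: split_def)
  show "(\<lambda>(\<tau>, B). add_to \<tau> i B) ` Sigma (Parts M) (insert {}) \<subseteq> Parts (insert i M)"
    using add_to_parts[OF assms] by auto
  show "split_off i ` Parts (insert i M) \<subseteq> Sigma (Parts M) (insert {})"
  proof
    fix x assume "x \<in> split_off i ` Parts (insert i M)"
    then obtain \<sigma> where s: "\<sigma> \<in> Parts (insert i M)" "x = split_off i \<sigma>" by auto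
    have "fst x \<in> Parts M" "snd x \<in> insert {} (fst x)" using split_off_parts[OF assms s(1)] s(2) by auto
    then show "x \<in> Sigma (Parts M) (insert {})" by (metis SigmaI prod.collapse)
  qed
qed

lemma sum_swap:
  fixes f :: "'a::finite set set \<Rightarrow> real"
  assumes "i \<notin> M"
  shows "(\<Sum>\<tau>\<in>Parts M. \<Sum>B\<in>insert {} \<tau>. f (add_to \<tau> i B)) = (\<Sum>\<sigma>\<in>Parts (insert i M). f \<sigma>)"
proof -
  have "(\<Sum>\<tau>\<in>Parts M. \<Sum>B\<in>insert {} \<tau>. f (add_to \<tau> i B))
      = (\<Sum>x\<in>Sigma (Parts M) (\<lambda>\<tau>. insert {} \<tau>). f ((\<lambda>(\<tau>, B). add_to \<tau> i B) x))"
    by (subst sum.Sigma) (auto simp: split_def)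
  also have "\<dots> = (\<Sum>\<sigma>\<in>Parts (insert i M). f \<sigma>)"
    by (rule sum.reindex_bij_betw[OF add_to_bij[OF assms]])
  finally show ?thesis .
qed

lemma restr_add_to:
  assumes "B \<in> insert {} \<tau>" "i \<notin> X"
  shows "restr_part X (add_to \<tau> i B) = restr_part X \<tau>"
proof (cases "B = {}")
  case True
  then show ?thesis using assms by (auto simp: restr_part_def add_to_def)
next
  case False
  then have B: "B \<in> \<tau>" using assms by auto
  have "(\<lambda>C. C \<inter> X) ` (insert (insert i B) (\<tau> - {B})) = (\<lambda>C. C \<inter> X) ` \<tau>"
  proof -
    have "(\<lambda>C. C \<inter> X) ` (insert (insert i B) (\<tau> - {B})) = insert (B \<inter> X) ((\<lambda>C. C \<inter> X) ` (\<tau> - {B}))"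
      using assms(2) by auto
    also have "\<dots> = (\<lambda>C. C \<inter> X) ` \<tau>" using B by blast
    finally show ?thesis .
  qed
  then show ?thesis using False by (simp add: restr_part_def add_to_def)
qed


lemma remove_list_zero:
  "(\<forall>\<pi>. w {} \<pi> = 0) \<Longrightarrow> remove_list p N w xs {} \<pi> = 0"
proof (induction xs arbitrary: N w)
  case Nil
  then show ?case by simp
next
  case (Cons x xs)
  have "\<forall>\<pi>. restr_p p N w x {} \<pi> = 0" by (simp add: restr_p_def)
  then show ?case using Cons.IH by simp
qed

lemma remove_list_zero2: "xs \<noteq> [] \<Longrightarrow> remove_list p N w xs {} \<pi> = 0"
proof (cases xs)
  case (Cons x ys)
  have "\<forall>\<pi>. restr_p p N w x {} \<pi> = 0" by (simp add: restr_p_def)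
  then show ?thesis using Cons remove_list_zero by simp
qed simp

lemma restr_part_self:
  assumes "\<sigma> \<in> Parts X"
  shows "restr_part X \<sigma> = \<sigma>"
proof -
  have "\<forall>C\<in>\<sigma>. C \<inter> X = C" using assms by (auto simp: Parts_def partition_on_def)
  then have "(\<lambda>C. C \<inter> X) ` \<sigma> = \<sigma>" by simp
  moreover have "{} \<notin> \<sigma>" using assms by (auto simp: Parts_def partition_on_def)
  ultimately show ?thesis by (simp add: restr_part_def)
qed

lemma closed_form:
  fixes p :: "('a::finite) rpart"
  assumes pos: "positive_rp p"
  shows "distinct xs \<Longrightarrow> set xs \<subseteq> N \<Longrightarrow> S \<subseteq> N - set xs \<Longrightarrow> S \<noteq> {} \<Longrightarrow> \<pi> \<in> Parts (N - set xs - S) \<Longrightarrow>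
    remove_list p N w xs S \<pi> =
      real (fact (card N)) * real (fact (card N - length xs - card S))
        / (real (fact (card N - length xs)) * real (fact (card N - card S)))
        / p (N - set xs) (insert S \<pi>)
      * (\<Sum>\<sigma>\<in>Parts (N - S). if restr_part (N - set xs - S) \<sigma> = \<pi> then p N (insert S \<sigma>) * w S \<sigma> else 0)"
proof (induction xs arbitrary: N w)
  case Nil
  have "(\<Sum>\<sigma>\<in>Parts (N - S). if restr_part (N - S) \<sigma> = \<pi> then p N (insert S \<sigma>) * w S \<sigma> else 0)
     = (\<Sum>\<sigma>\<in>Parts (N - S). if \<sigma> = \<pi> then p N (insert S \<sigma>) * w S \<sigma> else 0)"
    by (rule sum.cong) (auto simp: restr_part_self)
  also have "\<dots> = p N (insert S \<pi>) * w S \<pi>" using Nil.prems by simp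
  finally have e: "(\<Sum>\<sigma>\<in>Parts (N - S). if restr_part (N - S) \<sigma> = \<pi> then p N (insert S \<sigma>) * w S \<sigma> else 0)
     = p N (insert S \<pi>) * w S \<pi>" .
  have "insert S \<pi> \<in> Parts N" using parts_insert(1)[of S N \<pi>] Nil.prems by simp
  then have "p N (insert S \<pi>) > 0" using pos by (simp add: positive_rp_def)
  then show ?case using e by simp
next
  case (Cons i xs)
  define N' where "N' = N - {i}"
  define X where "X = N' - set xs - S"
  have iN: "i \<in> N" and ixs: "i \<notin> set xs" and dxs: "distinct xs" and sxs: "set xs \<subseteq> N'"
    using Cons.prems by (auto simp: N'_def)
  have SN': "S \<subseteq> N' - set xs" using Cons.prems by (auto simp: N'_def)
  have iS: "i \<notin> S" using Cons.prems by auto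
  have NX: "N - set (i # xs) = N' - set xs" by (auto simp: N'_def)
  have piX: "\<pi> \<in> Parts (N' - set xs - S)" using Cons.prems NX by simp
  have IH: "remove_list p N' (restr_p p N w i) xs S \<pi> =
      real (fact (card N')) * real (fact (card N' - length xs - card S))
        / (real (fact (card N' - length xs)) * real (fact (card N' - card S)))
        / p (N' - set xs) (insert S \<pi>)
      * (\<Sum>\<sigma>\<in>Parts (N' - S). if restr_part X \<sigma> = \<pi> then p N' (insert S \<sigma>) * restr_p p N w i S \<sigma> else 0)"
    using Cons.IH[OF dxs sxs SN' Cons.prems(4) piX] by (simp add: X_def)
  define n where "n = card N"
  define s where "s = card S"
  define k where "k = length xs"
  have cN': "card N' = n - 1" using iN by (simp add: N'_def n_def)
  have "S \<inter> set xs = {}" using SN' by auto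
  then have "card (S \<union> set xs) = s + k" using dxs by (simp add: card_Un_disjoint s_def k_def distinct_card)
  moreover have "S \<union> set xs \<subseteq> N'" using SN' sxs by auto
  ultimately have skn: "s + k \<le> n - 1" using card_mono[of N' "S \<union> set xs"] cN' by simp
  have n1: "n \<ge> 1" using iN by (auto simp: n_def card_gt_0_iff Suc_le_eq)
  define c0 where "c0 = real n / (real n - real s)"
  have key: "p N' (insert S \<sigma>) * restr_p p N w i S \<sigma>
        = c0 * (\<Sum>B\<in>insert {} \<sigma>. p N (insert S (add_to \<sigma> i B)) * w S (add_to \<sigma> i B))"
    if "\<sigma> \<in> Parts (N' - S)" for \<sigma>
  proof -
    have "insert S \<sigma> \<in> Parts N'" using parts_insert(1)[of S N' \<sigma>] that SN' Cons.prems(4) by auto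
    then have a: "p N' (insert S \<sigma>) \<noteq> 0" using pos unfolding positive_rp_def by (metis less_irrefl)
    have r: "restr_p p N w i S \<sigma> = c0 * (\<Sum>B\<in>insert {} \<sigma>. p N (insert S (add_to \<sigma> i B)) / p N' (insert S \<sigma>) * w S (add_to \<sigma> i B))"
      using Cons.prems(4) unfolding restr_p_def c0_def n_def s_def N'_def by simp
    have "p N' (insert S \<sigma>) * restr_p p N w i S \<sigma>
       = c0 * (p N' (insert S \<sigma>) * (\<Sum>B\<in>insert {} \<sigma>. p N (insert S (add_to \<sigma> i B)) / p N' (insert S \<sigma>) * w S (add_to \<sigma> i B)))"
      unfolding r by (simp only: mult_ac)
    also have "\<dots> = c0 * (\<Sum>B\<in>insert {} \<sigma>. p N' (insert S \<sigma>) * (p N (insert S (add_to \<sigma> i B)) / p N' (insert S \<sigma>) * w S (add_to \<sigma> i B)))"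
      by (simp only: sum_distrib_left)
    also have "\<dots> = c0 * (\<Sum>B\<in>insert {} \<sigma>. p N (insert S (add_to \<sigma> i B)) * w S (add_to \<sigma> i B))"
      using a by simp
    finally show ?thesis .
  qed
  have "(\<Sum>\<sigma>\<in>Parts (N' - S). if restr_part X \<sigma> = \<pi> then p N' (insert S \<sigma>) * restr_p p N w i S \<sigma> else 0)
      = (\<Sum>\<sigma>\<in>Parts (N' - S). c0 * (\<Sum>B\<in>insert {} \<sigma>. (\<lambda>\<rho>. if restr_part X \<rho> = \<pi> then p N (insert S \<rho>) * w S \<rho> else 0) (add_to \<sigma> i B)))"
  proof (rule sum.cong)
    fix \<sigma> assume s: "\<sigma> \<in> Parts (N' - S)"
    have iX: "i \<notin> X" by (simp add: X_def N'_def)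
    have "(\<Sum>B\<in>insert {} \<sigma>. (\<lambda>\<rho>. if restr_part X \<rho> = \<pi> then p N (insert S \<rho>) * w S \<rho> else 0) (add_to \<sigma> i B))
        = (\<Sum>B\<in>insert {} \<sigma>. if restr_part X \<sigma> = \<pi> then p N (insert S (add_to \<sigma> i B)) * w S (add_to \<sigma> i B) else 0)"
      by (rule sum.cong) (auto simp: restr_add_to[OF _ iX])
    then show "(if restr_part X \<sigma> = \<pi> then p N' (insert S \<sigma>) * restr_p p N w i S \<sigma> else 0) =
         c0 * (\<Sum>B\<in>insert {} \<sigma>. (\<lambda>\<rho>. if restr_part X \<rho> = \<pi> then p N (insert S \<rho>) * w S \<rho> else 0) (add_to \<sigma> i B))"
      using key[OF s] by simp
  qed simp
  also have "\<dots> = c0 * (\<Sum>\<sigma>\<in>Parts (insert i (N' - S)). if restr_part X \<sigma> = \<pi> then p N (insert S \<sigma>) * w S \<sigma> else 0)"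
    using sum_swap[of i "N' - S" "\<lambda>\<rho>. if restr_part X \<rho> = \<pi> then p N (insert S \<rho>) * w S \<rho> else 0"]
    by (simp add: sum_distrib_left[symmetric] N'_def)
  also have "insert i (N' - S) = N - S" using iN iS by (auto simp: N'_def)
  finally have sumeq: "(\<Sum>\<sigma>\<in>Parts (N' - S). if restr_part X \<sigma> = \<pi> then p N' (insert S \<sigma>) * restr_p p N w i S \<sigma> else 0)
      = c0 * (\<Sum>\<sigma>\<in>Parts (N - S). if restr_part X \<sigma> = \<pi> then p N (insert S \<sigma>) * w S \<sigma> else 0)" .
  have cS: "card N' - card S = n - 1 - s" using cN' s_def by simp
  obtain m where m: "n = Suc m" using n1 by (cases n) auto
  have const: "real (fact (n - 1)) * real (fact (n - 1 - k - s)) / (real (fact (n - 1 - k)) * real (fact (n - 1 - s))) * c0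
      = real (fact n) * real (fact (n - Suc k - s)) / (real (fact (n - Suc k)) * real (fact (n - s)))"
  proof -
    have sm: "s \<le> m" using skn m by simp
    have f1: "(fact n :: real) = real n * fact m" using m by simp
    have "(fact (n - s) :: real) = real (n - s) * fact (m - s)" using m sm by (simp add: Suc_diff_le)
    moreover have "real (n - s) = real n - real s" using sm m by simp
    ultimately have f2: "(fact (n - s) :: real) = (real n - real s) * fact (m - s)" by simp
    have e1: "n - 1 - k - s = m - k - s" "n - 1 - k = m - k" "n - 1 = m" "n - 1 - s = m - s"
       "n - Suc k - s = m - k - s" "n - Suc k = m - k" using m by auto
    have ns: "real n - real s \<noteq> 0" using sm m by simp
    have p1: "(fact (m - k) :: real) \<noteq> 0" "(fact (m - s) :: real) \<noteq> 0" by simp_all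
    show ?thesis unfolding e1 c0_def of_nat_fact f1 f2 using ns p1 by (simp add: field_simps)
  qed
  have "remove_list p N w (i # xs) S \<pi> = remove_list p N' (restr_p p N w i) xs S \<pi>" by (simp add: N'_def)
  also have "\<dots> = real (fact (n - 1)) * real (fact (n - 1 - k - s)) / (real (fact (n - 1 - k)) * real (fact (n - 1 - s)))
        / p (N' - set xs) (insert S \<pi>)
      * (c0 * (\<Sum>\<sigma>\<in>Parts (N - S). if restr_part X \<sigma> = \<pi> then p N (insert S \<sigma>) * w S \<sigma> else 0))"
    using IH sumeq cN' cS by (simp add: k_def s_def)
  also have "\<dots> = (real (fact (n - 1)) * real (fact (n - 1 - k - s)) / (real (fact (n - 1 - k)) * real (fact (n - 1 - s))) * c0)
        / p (N' - set xs) (insert S \<pi>)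
      * (\<Sum>\<sigma>\<in>Parts (N - S). if restr_part X \<sigma> = \<pi> then p N (insert S \<sigma>) * w S \<sigma> else 0)"
    by simp
  also note const
  finally show ?case using NX by (simp add: n_def s_def k_def X_def)
qed


lemma block_prob:
  fixes p :: "('a::finite) rpart"
  assumes gp: "generates_potential p" and S: "S \<noteq> {}" "S \<subseteq> N"
  shows "(\<Sum>\<sigma>\<in>Parts (N - S). p N (insert S \<sigma>))
     = real (fact (card S - 1) * fact (card N - card S)) / real (fact (card N))"
proof -
  define v where "v = (\<lambda>T::'a set. if T = S then (1::real) else 0)"
  have tu: "tu_game N v" using S by (simp add: tu_game_def v_def)
  have e: "expect p N (tu_as_tux v) = Pot N v" using gp tu by (simp add: generates_potential_def)
  have "Pot N v = (\<Sum>T\<in>{T. T \<subseteq> N \<and> T \<noteq> {}}. if T = S then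
      real (fact (card T - 1) * fact (card N - card T)) / real (fact (card N)) else 0)"
    unfolding Pot_def v_def by (rule sum.cong) auto
  also have "\<dots> = real (fact (card S - 1) * fact (card N - card S)) / real (fact (card N))"
    using S by simp
  finally have pot: "Pot N v = real (fact (card S - 1) * fact (card N - card S)) / real (fact (card N))" .
  have "expect p N (tu_as_tux v) = (\<Sum>\<pi>\<in>Parts N. if S \<in> \<pi> then p N \<pi> else 0)"
    unfolding expect_def tu_as_tux_def v_def by (rule sum.cong) auto
  also have "\<dots> = (\<Sum>\<pi>\<in>{\<pi>\<in>Parts N. S \<in> \<pi>}. p N \<pi>)"
    by (simp add: sum.inter_filter)
  also have "\<dots> = (\<Sum>\<sigma>\<in>Parts (N - S). p N (insert S \<sigma>))"
  proof -
    have "bij_betw (insert S) (Parts (N - S)) {\<pi>\<in>Parts N. S \<in> \<pi>}"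
    proof (rule bij_betw_byWitness[where f' = "\<lambda>\<pi>. \<pi> - {S}"])
      show "\<forall>a\<in>Parts (N - S). insert S a - {S} = a" using parts_insert(2)[OF S] by auto
      show "\<forall>a'\<in>{\<pi> \<in> Parts N. S \<in> \<pi>}. insert S (a' - {S}) = a'" by auto
      show "insert S ` Parts (N - S) \<subseteq> {\<pi> \<in> Parts N. S \<in> \<pi>}" using parts_insert(1)[OF S] by auto
      show "(\<lambda>\<pi>. \<pi> - {S}) ` {\<pi> \<in> Parts N. S \<in> \<pi>} \<subseteq> Parts (N - S)" using parts_remove by auto
    qed
    then show ?thesis by (rule sum.reindex_bij_betw[symmetric])
  qed
  finally show ?thesis using e pot by simp
qed

lemma self_prob:
  fixes p :: "('a::finite) rpart"
  assumes gp: "generates_potential p" and S: "S \<noteq> {}"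
  shows "p S {S} = 1 / real (card S)"
proof -
  have "Parts ({}::'a set) = {{}}" by (auto simp: Parts_def partition_on_empty)
  then have "(\<Sum>\<sigma>\<in>Parts (S - S). p S (insert S \<sigma>)) = p S {S}" by simp
  then have "p S {S} = real (fact (card S - 1)) / real (fact (card S))"
    using block_prob[OF gp S, of S] by simp
  also have "\<dots> = 1 / real (card S)"
  proof -
    obtain m where m: "card S = Suc m" using S by (cases "card S") auto
    have "(fact m :: real) > 0" by simp
    moreover have "(fact (Suc m) :: real) = (real m + 1) * fact m" by simp
    moreover have "fact m + fact m * real m \<noteq> 0"
      using \<open>(fact m :: real) > 0\<close> by (metis add_pos_nonneg less_irrefl mult_nonneg_nonneg of_nat_0_le_iff order_less_imp_le)
    ultimately show ?thesis unfolding m by (simp add: field_simps)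
  qed
  finally show ?thesis .
qed


lemma v_restr_formula:
  fixes p :: "('a::finite) rpart"
  assumes pos: "positive_rp p" and gp: "generates_potential p" and SN: "S \<subseteq> N" and N: "N \<noteq> {}"
  shows "v_restr p N w S = real (card S) * (real (fact (card N)) / (real (fact (card S)) * real (fact (card N - card S))))
     * (\<Sum>\<sigma>\<in>Parts (N - S). p N (insert S \<sigma>) * w S \<sigma>)"
proof -
  define xs where "xs = (SOME xs. set xs = N - S \<and> distinct xs)"
  have ex: "\<exists>xs. set xs = N - S \<and> distinct xs" by (rule finite_distinct_list) simp
  then have h: "set xs = N - S" "distinct xs" unfolding xs_def using someI_ex[OF ex] by auto
  have vr: "v_restr p N w S = remove_list p N w xs S {}" by (simp add: v_restr_def remove_set_def xs_def)
  show ?thesis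
  proof (cases "S = {}")
    case True
    then have "xs \<noteq> []" using h N by auto
    then show ?thesis using vr True remove_list_zero2 by simp
  next
    case False
    have e1: "N - set xs = S" using h SN by auto
    have e2: "N - set xs - S = {}" using e1 by simp
    have pe: "({}::'a set set) \<in> Parts ({}::'a set)" by (simp add: Parts_def partition_on_empty)
    have len: "length xs = card N - card S" using h SN by (simp add: distinct_card[symmetric] card_Diff_subset)
    have sn: "card S \<le> card N" using SN by (simp add: card_mono)
    have cf: "remove_list p N w xs S {} = real (fact (card N)) * real (fact (card N - length xs - card S))
        / (real (fact (card N - length xs)) * real (fact (card N - card S)))
        / p (N - set xs) (insert S {})
      * (\<Sum>\<sigma>\<in>Parts (N - S). if restr_part (N - set xs - S) \<sigma> = {} then p N (insert S \<sigma>) * w S \<sigma> else 0)"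
      by (rule closed_form[OF pos h(2)]) (use h SN False pe e1 e2 in auto)
    have r0: "restr_part {} \<sigma> = {}" for \<sigma> :: "'a set set" by (auto simp: restr_part_def)
    have l1: "card N - length xs - card S = 0" "card N - length xs = card S" using len sn by auto
    have ps: "p S {S} = 1 / real (card S)" using self_prob[OF gp False] .
    show ?thesis unfolding vr cf e2 l1 by (simp add: e1 r0 ps)
  qed
qed


lemma aux_field:
  fixes k a f b v :: real
  assumes "k \<noteq> 0"
  shows "a \<noteq> 0 \<Longrightarrow> f \<noteq> 0 \<Longrightarrow> b \<noteq> 0 \<Longrightarrow> k * (a / (k * f * b)) * (f * b / a * v) = v"
  using assms by (simp add: field_simps)

lemma tu_restr:
  fixes p :: "('a::finite) rpart"
  assumes pos: "positive_rp p" and gp: "generates_potential p" and tu: "tu_game N v"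
    and SN: "S \<subseteq> N" and N: "N \<noteq> {}"
  shows "v_restr p N (tu_as_tux v) S = v S"
proof (cases "S = {}")
  case True
  then show ?thesis using v_restr_formula[OF pos gp SN N] tu by (simp add: tu_game_def)
next
  case False
  have "v_restr p N (tu_as_tux v) S = real (card S) * (real (fact (card N)) / (real (fact (card S)) * real (fact (card N - card S))))
     * ((\<Sum>\<sigma>\<in>Parts (N - S). p N (insert S \<sigma>)) * v S)"
    using v_restr_formula[OF pos gp SN N] by (simp add: tu_as_tux_def sum_distrib_right)
  also have "\<dots> = real (card S) * (real (fact (card N)) / (real (fact (card S)) * real (fact (card N - card S))))
     * (real (fact (card S - 1) * fact (card N - card S)) / real (fact (card N)) * v S)"
    using block_prob[OF gp False SN] by simp
  also have "\<dots> = v S"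
  proof -
    have k: "real (card S) \<noteq> 0" using False by simp
    have fs: "(fact (card S)::real) = real (card S) * fact (card S - 1)"
      using False by (metis card_0_eq finite fact_reduce neq0_conv of_nat_fact)
    show ?thesis unfolding fs of_nat_mult of_nat_fact using aux_field[OF k, of "fact (card N)" "fact (card S - 1)" "fact (card N - card S)" "v S"] by simp

  qed
  finally show ?thesis .
qed

lemma part2:
  fixes p :: "('a::finite) rpart"
  assumes pos: "positive_rp p" and gp: "generates_potential p" and tu: "tu_game N v" and iN: "i \<in> N"
  shows "Shapley_r p N (tu_as_tux v) i = Shapley N v i"
proof -
  have N: "N \<noteq> {}" using iN by auto
  show ?thesis unfolding Shapley_r_def Shapley_def
  proof (rule sum.cong)
    fix T assume T: "T \<in> Pow (N - {i})"
    then have "insert i T \<subseteq> N" "T \<subseteq> N" using iN by auto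
    then show "real (fact (card T) * fact (card N - card T - 1)) / real (fact (card N)) *
         (v_restr p N (tu_as_tux v) (insert i T) - v_restr p N (tu_as_tux v) T) =
         real (fact (card T) * fact (card N - card T - 1)) / real (fact (card N)) * (v (insert i T) - v T)"
      using tu_restr[OF pos gp tu _ N] by simp
  qed simp
qed


lemma arith_abs:
  fixes F G A k e t Qi QT :: real
  assumes "F \<noteq> 0" "G \<noteq> 0" "A \<noteq> 0" "k \<noteq> 0" "e \<noteq> 0"
  shows "F * G / A * (k * (A / (k * F * G)) * Qi - t * (A / (F * (e * G))) * QT) = Qi - t / e * QT"
  using assms by (simp add: field_simps)

lemma arith_T:
  fixes t d :: nat and Qi QT :: real
  shows "real (fact t * fact d) / real (fact (Suc (t + d))) *
     (real (Suc t) * (real (fact (Suc (t + d))) / (real (fact (Suc t)) * real (fact d))) * Qi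
      - real t * (real (fact (Suc (t + d))) / (real (fact t) * real (fact (Suc d)))) * QT)
   = Qi - real t / (real (Suc (t + d)) - real t) * QT"
proof -
  have f1: "(fact (Suc t) :: real) = real (Suc t) * fact t" by simp
  have f2: "(fact (Suc d) :: real) = real (Suc d) * fact d" by simp
  have p: "(fact t :: real) > 0" "(fact d :: real) > 0" "(fact (Suc (t + d)) :: real) > 0" by simp_all
  have e: "real (Suc (t + d)) - real t = real (Suc d)" by simp
  show ?thesis unfolding of_nat_mult of_nat_fact f1 f2 e
    by (rule arith_abs) (use p in auto)
qed

lemma part1:
  fixes p :: "('a::finite) rpart"
  assumes pos: "positive_rp p" and gp: "generates_potential p" and iN: "i \<in> N"
  shows "Shapley_r p N w i = Shapley_p p N w i"
proof -
  have N: "N \<noteq> {}" using iN by auto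
  define n where "n = card N"
  have emb: "emb_coal (N - {i}) = Sigma (Pow (N - {i})) (\<lambda>T. Parts (N - {i} - T))"
    by (auto simp: emb_coal_def)
  have sp: "Shapley_p p N w i = (\<Sum>T\<in>Pow (N - {i}). \<Sum>\<tau>\<in>Parts (N - {i} - T).
      p N (insert (insert i T) \<tau>) * w (insert i T) \<tau>
      - real (card T) / (real (card N) - real (card T)) *
        (\<Sum>B \<in> insert {} \<tau>. p N (insert T (add_to \<tau> i B)) * w T (add_to \<tau> i B)))"
    unfolding Shapley_p_def emb by (subst sum.Sigma) auto
  show ?thesis unfolding Shapley_r_def Shapley_def sp
  proof (rule sum.cong)
    fix T assume T: "T \<in> Pow (N - {i})"
    define t where "t = card T"
    have iT: "i \<notin> T" using T by auto
    have TN: "T \<subseteq> N" "insert i T \<subseteq> N" using T iN by auto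
    have cT: "card (insert i T) = Suc t" using iT by (simp add: t_def)
    have "card T \<le> card (N - {i})" using T by (simp add: card_mono)
    moreover have "card N > 0" using iN by (auto simp: card_gt_0_iff)
    ultimately have tn: "t < n" using iN by (simp add: t_def n_def)
    then obtain d where d: "n = Suc (t + d)" by (metis add_Suc_right less_iff_Suc_add)
    define Qi where "Qi = (\<Sum>\<sigma>\<in>Parts (N - insert i T). p N (insert (insert i T) \<sigma>) * w (insert i T) \<sigma>)"
    define QT where "QT = (\<Sum>\<sigma>\<in>Parts (N - T). p N (insert T \<sigma>) * w T \<sigma>)"
    have e1: "N - {i} - T = N - insert i T" by auto
    have e2: "insert i (N - {i} - T) = N - T" using iN iT by auto
    have sw: "(\<Sum>\<tau>\<in>Parts (N - {i} - T). \<Sum>B \<in> insert {} \<tau>. p N (insert T (add_to \<tau> i B)) * w T (add_to \<tau> i B)) = QT"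
      using sum_swap[of i "N - {i} - T" "\<lambda>\<rho>. p N (insert T \<rho>) * w T \<rho>"] e2 by (simp add: QT_def)
    have rhs: "(\<Sum>\<tau>\<in>Parts (N - {i} - T).
      p N (insert (insert i T) \<tau>) * w (insert i T) \<tau>
      - real (card T) / (real (card N) - real (card T)) *
        (\<Sum>B \<in> insert {} \<tau>. p N (insert T (add_to \<tau> i B)) * w T (add_to \<tau> i B)))
      = Qi - real t / (real n - real t) * QT"
      unfolding sum_subtractf sum_distrib_left[symmetric] sw by (simp add: Qi_def e1 t_def n_def)
    have vi: "v_restr p N w (insert i T) = real (Suc t) * (real (fact n) / (real (fact (Suc t)) * real (fact (n - Suc t)))) * Qi"
      using v_restr_formula[OF pos gp TN(2) N] cT by (simp add: Qi_def n_def)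
    have vt: "v_restr p N w T = real t * (real (fact n) / (real (fact t) * real (fact (n - t)))) * QT"
      using v_restr_formula[OF pos gp TN(1) N] by (simp add: QT_def n_def t_def)
    have dd: "n - Suc t = d" "n - t = Suc d" "n - t - 1 = d" using d by auto
    have lhs: "real (fact (card T) * fact (card N - card T - 1)) / real (fact (card N)) *
         (v_restr p N w (insert i T) - v_restr p N w T) = Qi - real t / (real n - real t) * QT"
      unfolding vi vt t_def[symmetric] n_def[symmetric] dd diff_Suc_1 unfolding d by (rule arith_T)
    show "real (fact (card T) * fact (card N - card T - 1)) / real (fact (card N)) *
         (v_restr p N w (insert i T) - v_restr p N w T) =
         (\<Sum>\<tau>\<in>Parts (N - {i} - T).
      p N (insert (insert i T) \<tau>) * w (insert i T) \<tau>
      - real (card T) / (real (card N) - real (card T)) *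
        (\<Sum>B \<in> insert {} \<tau>. p N (insert T (add_to \<tau> i B)) * w T (add_to \<tau> i B)))"
      unfolding rhs by (rule lhs)
  qed simp
qed

theorem corollary2:
  fixes p :: "('a::finite) rpart"
  assumes "random_partition p"
    and "positive_rp p"
    and "generates_potential p"
  shows "(\<forall>N w i. tux_game N w \<longrightarrow> i \<in> N \<longrightarrow> Shapley_r p N w i = Shapley_p p N w i)
       \<and> (\<forall>N v i. tu_game N v \<longrightarrow> i \<in> N \<longrightarrow> Shapley_r p N (tu_as_tux v) i = Shapley N v i)"
  using part1[OF assms(2,3)] part2[OF assms(2,3)] by blast

end
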